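(* Let $G$ be an innately transitive permutation group on a finite set $\Omega$ and let $M$ be a plinth of $G$. If $\{\Gamma_1,\ldots,\Gamma_\ell\}$ is a $G$-invariant Cartesian decomposition of $\Omega$, then each $\Gamma_i$ ($1\le i\le \ell$) is an $M$-invariant partition of $\Omega$, that is, every element of $M$ maps each part of $\Gamma_i$ onto a part of $\Gamma_i$.
   Context: A Cartesian decomposition of a finite set $\Omega$ is a set $\mathcal E=\{\Gamma_1,\ldots,\Gamma_\ell\}$ of partitions of $\Omega$ such that $|\gamma_1\cap\cdots\cap\gamma_\ell|=1$ for all $\gamma_1\in\Gamma_1,\ldots,\gamma_\ell\in\Gamma_\ell$. For $g\in\mathrm{Sym}(\Omega)$, $\mathcal E$ is $g$-invariant if $g$ permutes the partitions in $\mathcal E$ (i.e. for each $i$ the image of $\Gamma_i$ under $g$ is some $\Gamma_j$); $\mathcal E$ is $G$-invariant if it is $g$-invariant for all $g\in G$. A finite permutation group is innately transitive if it has at least one transitive minimal normal subgroup; such a transitive minimal normal subgroup is called a plinth. *)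

theory Defs
  imports "HOL-Algebra.Bij" "HOL-Algebra.Coset" "HOL-Library.Disjoint_Sets"
begin

text \<open>A permutation group on \<Omega> is a subgroup G of the symmetric group BijGroup \<Omega>
  (elements are bijections of \<Omega>, extensional outside \<Omega>).\<close>

definition perm_grp :: "'a set \<Rightarrow> ('a \<Rightarrow> 'a) set \<Rightarrow> ('a \<Rightarrow> 'a) monoid" where
  "perm_grp \<Omega> G = (BijGroup \<Omega>)\<lparr>carrier := G\<rparr>"

definition perm_group_on :: "'a set \<Rightarrow> ('a \<Rightarrow> 'a) set \<Rightarrow> bool" where
  "perm_group_on \<Omega> G \<longleftrightarrow> subgroup G (BijGroup \<Omega>)"

definition transitive_on :: "'a set \<Rightarrow> ('a \<Rightarrow> 'a) set \<Rightarrow> bool" where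
  "transitive_on \<Omega> M \<longleftrightarrow> (\<forall>x\<in>\<Omega>. \<forall>y\<in>\<Omega>. \<exists>m\<in>M. m x = y)"

definition minimal_normal :: "'a set \<Rightarrow> ('a \<Rightarrow> 'a) set \<Rightarrow> ('a \<Rightarrow> 'a) set \<Rightarrow> bool" where
  "minimal_normal \<Omega> G M \<longleftrightarrow>
     M \<lhd> perm_grp \<Omega> G \<and> M \<noteq> {\<one>\<^bsub>perm_grp \<Omega> G\<^esub>} \<and>
     (\<forall>N. N \<lhd> perm_grp \<Omega> G \<longrightarrow> N \<subseteq> M \<longrightarrow> N = {\<one>\<^bsub>perm_grp \<Omega> G\<^esub>} \<or> N = M)"

definition plinth :: "'a set \<Rightarrow> ('a \<Rightarrow> 'a) set \<Rightarrow> ('a \<Rightarrow> 'a) set \<Rightarrow> bool" where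
  "plinth \<Omega> G M \<longleftrightarrow> minimal_normal \<Omega> G M \<and> transitive_on \<Omega> M"

definition innately_transitive :: "'a set \<Rightarrow> ('a \<Rightarrow> 'a) set \<Rightarrow> bool" where
  "innately_transitive \<Omega> G \<longleftrightarrow> perm_group_on \<Omega> G \<and> (\<exists>M. plinth \<Omega> G M)"

definition cartesian_decomposition :: "'a set \<Rightarrow> 'a set set set \<Rightarrow> bool" where
  "cartesian_decomposition \<Omega> E \<longleftrightarrow>
     (\<forall>\<Gamma>\<in>E. partition_on \<Omega> \<Gamma>) \<and>
     (\<forall>c. (\<forall>\<Gamma>\<in>E. c \<Gamma> \<in> \<Gamma>) \<longrightarrow> card (\<Omega> \<inter> (\<Inter>\<Gamma>\<in>E. c \<Gamma>)) = 1)"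

definition part_image :: "('a \<Rightarrow> 'a) \<Rightarrow> 'a set set \<Rightarrow> 'a set set" where
  "part_image g \<Gamma> = (\<lambda>\<gamma>. g ` \<gamma>) ` \<Gamma>"

definition invariant_decomposition :: "('a \<Rightarrow> 'a) set \<Rightarrow> 'a set set set \<Rightarrow> bool" where
  "invariant_decomposition G E \<longleftrightarrow> (\<forall>g\<in>G. \<forall>\<Gamma>\<in>E. part_image g \<Gamma> \<in> E)"

definition invariant_partition :: "('a \<Rightarrow> 'a) set \<Rightarrow> 'a set set \<Rightarrow> bool" where
  "invariant_partition M \<Gamma> \<longleftrightarrow> (\<forall>m\<in>M. \<forall>\<gamma>\<in>\<Gamma>. m ` \<gamma> \<in> \<Gamma>)"

end

theory Submission
  imports Defs "HOL-Combinatorics.Permutations" "HOL-Algebra.Group_Action" "HOL-Computational_Algebra.Primes"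
begin
lemma mts: "prime (p::nat) \<Longrightarrow> q > 0 \<Longrightarrow> multiplicity p (p * q) = Suc (multiplicity p q)"
  by (rule multiplicity_times_same) (auto simp: prime_gt_1_nat)

lemma fq: "prime_elem (p::nat) \<Longrightarrow> q > 0 \<Longrightarrow> multiplicity p (fact q :: nat) = multiplicity p q + multiplicity p (fact (q - 1) :: nat)"
proof -
  assume pe: "prime_elem p" and q0: "q > 0"
  have e: "fact q = q * (fact (q - 1) :: nat)" using q0 by (cases q) auto
  have "multiplicity p (fact q :: nat) = multiplicity p (q * (fact (q - 1) :: nat))" by (rule arg_cong[OF e])
  also have "\<dots> = multiplicity p q + multiplicity p (fact (q - 1) :: nat)"
    by (rule prime_elem_multiplicity_mult_distrib[OF pe]) (use q0 in auto)
  finally show ?thesis .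
qed

lemma d2: fixes p q r :: nat assumes "p > 1" "q > 0" "Suc r = p * q" shows "r div p = q - 1"
proof -
  obtain q' where q': "q = Suc q'" using assms(2) by (cases q) auto
  have "Suc r = p * q' + p" using assms(3) unfolding q' by simp
  then have r: "r = (p - 1) + q' * p" using assms(1) by (simp add: mult.commute)
  have "(p - 1) div p = 0" using assms by simp
  moreover have "((p - 1) + q' * p) div p = q' + (p - 1) div p"
    by (rule div_mult_self1) (use assms in simp)
  ultimately show ?thesis using r q' by simp
qed

lemma d1: "prime (p::nat) \<Longrightarrow> Suc r = p * q \<Longrightarrow> Suc r div p = q"
  by (simp add: prime_gt_0_nat)
lemma d0: "prime (p::nat) \<Longrightarrow> \<not> p dvd Suc r \<Longrightarrow> Suc r div p = r div p"
  by (metis div_Suc dvd_eq_mod_eq_0)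
lemma q0: "Suc r = p * q \<Longrightarrow> q > (0::nat)" by (cases q) auto
lemma ar1: "(x::nat) = m + y \<Longrightarrow> m = 0 \<Longrightarrow> y = a + b \<Longrightarrow> x = a + b" by simp
lemma ar2: "(x::nat) = Suc mq + y \<Longrightarrow> y = (q - 1) + z \<Longrightarrow> fq = mq + z \<Longrightarrow> q > 0 \<Longrightarrow> x = q + fq" by simp

lemma mult_fact_rec:
  fixes p :: nat assumes p: "prime p"
  shows "multiplicity p (fact r) = r div p + multiplicity p (fact (r div p) :: nat)"
proof (induction r)
  case 0 then show ?case by simp
next
  case (Suc r)
  have pe: "prime_elem p" using p by simp
  have A: "multiplicity p (fact (Suc r) :: nat) = multiplicity p (Suc r) + multiplicity p (fact r :: nat)"
    using fq[OF pe, of "Suc r"] by (simp only: diff_Suc_1 zero_less_Suc)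
  show ?case
  proof (cases "p dvd Suc r")
    case False
    have "multiplicity p (Suc r) = 0" by (rule not_dvd_imp_multiplicity_0[OF False])
    from ar1[OF A this Suc.IH] show ?thesis unfolding d0[OF p False] .
  next
    case True
    then obtain q where q: "Suc r = p * q" by blast
    have q0: "q > 0" by (rule q0[OF q])
    have d2: "r div p = q - 1" by (rule d2[OF _ q0 q]) (use p prime_gt_1_nat in blast)
    have m: "multiplicity p (Suc r) = Suc (multiplicity p q)"
      unfolding q by (rule mts[OF p q0])
    have f: "multiplicity p (fact q :: nat) = multiplicity p q + multiplicity p (fact (q - 1) :: nat)"
      using fq[OF pe q0] .
    have IH: "multiplicity p (fact r :: nat) = (q - 1) + multiplicity p (fact (q - 1) :: nat)"
      using Suc.IH unfolding d2 .
    have "multiplicity p (fact (Suc r) :: nat) = q + multiplicity p (fact q :: nat)"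
      by (rule ar2[OF _ IH f q0]) (use A m in \<open>simp only:\<close>)
    then show ?thesis unfolding d1[OF p q] .
  qed
qed
lemma a2: "(p::nat) \<ge> 2 \<Longrightarrow> r > 0 \<Longrightarrow> r div p < r" by simp
lemma a4: "(m::nat) = a + b \<Longrightarrow> b < a \<Longrightarrow> 2 * a \<le> r \<Longrightarrow> m < r" by linarith
lemma a5: "(m::nat) = a + b \<Longrightarrow> a = 0 \<Longrightarrow> b = 0 \<Longrightarrow> 0 < r \<Longrightarrow> m < r" by linarith
lemma a6: "(p::nat) \<ge> 2 \<Longrightarrow> 2 * (r div p) \<le> r"
proof -
  assume p2: "p \<ge> 2"
  have "2 * (r div p) \<le> p * (r div p)" by (rule mult_le_mono1[OF p2])
  also have "\<dots> \<le> r" by (rule times_div_less_eq_dividend)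
  finally show ?thesis .
qed
lemma mult_fact_less:
  fixes p :: nat assumes p: "prime p"
  shows "r > 0 \<Longrightarrow> multiplicity p (fact r :: nat) < r"
proof (induction r rule: less_induct)
  case (less r)
  have p2: "p \<ge> 2" using p by (rule prime_ge_2_nat)
  have e: "multiplicity p (fact r :: nat) = r div p + multiplicity p (fact (r div p) :: nat)"
    by (rule mult_fact_rec[OF p])
  show ?case
  proof (cases "r div p = 0")
    case True
    have "multiplicity p (fact (r div p) :: nat) = 0" unfolding True by simp
    then show ?thesis using a5[OF e True _ less.prems] by blast
  next
    case False
    have lt: "r div p < r" by (rule a2[OF p2 less.prems])
    have "multiplicity p (fact (r div p) :: nat) < r div p"
      by (rule less.IH[OF lt]) (use False in simp)
    then show ?thesis by (rule a4[OF e _ a6[OF p2]])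
  qed
qed

lemma not_pow_dvd_fact:
  fixes p :: nat assumes p: "prime p" and r: "r > 0"
  shows "\<not> p ^ r dvd fact r"
proof
  assume d: "p ^ r dvd fact r"
  have nu: "\<not> is_unit p" using p by (metis not_prime_unit)
  have "multiplicity p (fact r :: nat) \<ge> r"
    by (rule multiplicity_geI[OF fact_nonzero nu d])
  then show False using mult_fact_less[OF p r] by linarith
qed

lemma part_image_mult:
  assumes "g \<in> Bij \<Omega>" "h \<in> Bij \<Omega>" "\<Delta> \<subseteq> Pow \<Omega>"
  shows "part_image (g \<otimes>\<^bsub>BijGroup \<Omega>\<^esub> h) \<Delta> = part_image g (part_image h \<Delta>)"
proof -
  have e: "g \<otimes>\<^bsub>BijGroup \<Omega>\<^esub> h = compose \<Omega> g h" using assms(1,2) by (simp add: BijGroup_def)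
  have "compose \<Omega> g h ` \<gamma> = g ` h ` \<gamma>" if "\<gamma> \<in> \<Delta>" for \<gamma>
  proof -
    have sub: "\<gamma> \<subseteq> \<Omega>" using that assms(3) by blast
    have "compose \<Omega> g h ` \<gamma> = (g \<circ> h) ` \<gamma>"
    proof (rule image_cong[OF refl])
      fix x assume "x \<in> \<gamma>"
      then have "x \<in> \<Omega>" using sub by blast
      then show "compose \<Omega> g h x = (g \<circ> h) x" by (simp add: compose_eq)
    qed
    then show ?thesis by (simp add: image_comp)
  qed
  then show ?thesis unfolding e part_image_def image_image by (rule image_cong[OF refl])
qed

lemma part_image_one:
  assumes "\<Delta> \<subseteq> Pow \<Omega>"
  shows "part_image (\<one>\<^bsub>BijGroup \<Omega>\<^esub>) \<Delta> = \<Delta>"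
proof -
  have "(\<lambda>x\<in>\<Omega>. x) ` \<gamma> = \<gamma>" if "\<gamma> \<in> \<Delta>" for \<gamma>
  proof -
    have sub: "\<gamma> \<subseteq> \<Omega>" using that assms by blast
    have "(\<lambda>x\<in>\<Omega>. x) ` \<gamma> = (\<lambda>x. x) ` \<gamma>"
      by (rule image_cong[OF refl]) (use sub in auto)
    then show ?thesis by simp
  qed
  then have "(\<lambda>\<gamma>. (\<lambda>x\<in>\<Omega>. x) ` \<gamma>) ` \<Delta> = (\<lambda>\<gamma>. \<gamma>) ` \<Delta>" by (rule image_cong[OF refl])
  then show ?thesis unfolding part_image_def by (simp add: BijGroup_def)
qed

lemma part_image_Pow:
  assumes "g \<in> Bij \<Omega>" "\<Delta> \<subseteq> Pow \<Omega>"
  shows "part_image g \<Delta> \<subseteq> Pow \<Omega>"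
proof -
  have "g \<in> \<Omega> \<rightarrow> \<Omega>" by (rule Bij_imp_funcset[OF assms(1)])
  then show ?thesis using assms(2) unfolding part_image_def by blast
qed

lemma part_image_card:
  assumes "g \<in> Bij \<Omega>" "\<Delta> \<subseteq> Pow \<Omega>"
  shows "card (part_image g \<Delta>) = card \<Delta>"
proof -
  have "inj_on g \<Omega>" using assms(1) by (simp add: Bij_def bij_betw_def)
  then have "inj_on (image g) (Pow \<Omega>)" by (rule inj_on_image_Pow)
  then have "inj_on (image g) \<Delta>" using assms(2) by (rule inj_on_subset)
  then show ?thesis unfolding part_image_def by (rule card_image)
qed

lemma card_Bij:
  assumes "finite Q"
  shows "card (Bij Q) = fact (card Q)"
proof -
  define ext where "ext f = (\<lambda>x. if x \<in> Q then f x else x)" for f :: "'a \<Rightarrow> 'a"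
  have "bij_betw ext (Bij Q) {p. p permutes Q}"
  proof (rule bij_betw_byWitness[where f' = "\<lambda>p. restrict p Q"])
    show "\<forall>f\<in>Bij Q. restrict (ext f) Q = f"
    proof
      fix f assume f: "f \<in> Bij Q"
      then have fe: "f \<in> extensional Q" by (rule Bij_imp_extensional)
      show "restrict (ext f) Q = f"
      proof
        fix x show "restrict (ext f) Q x = f x"
        proof (cases "x \<in> Q")
          case True then show ?thesis by (simp add: ext_def)
        next
          case False then show ?thesis using extensional_arb[OF fe False] by simp
        qed
      qed
    qed
    show "\<forall>p\<in>{p. p permutes Q}. ext (restrict p Q) = p"
    proof
      fix p assume "p \<in> {p. p permutes Q}"
      then have p: "p permutes Q" by simp
      show "ext (restrict p Q) = p"
      proof
        fix x show "ext (restrict p Q) x = p x"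
          using permutes_not_in[OF p, of x] by (cases "x \<in> Q") (simp_all add: ext_def)
      qed
    qed
    show "ext ` Bij Q \<subseteq> {p. p permutes Q}"
    proof
      fix p assume "p \<in> ext ` Bij Q"
      then obtain f where f: "f \<in> Bij Q" "p = ext f" by blast
      have b: "bij_betw f Q Q" using f by (simp add: Bij_def)
      have "bij_betw (ext f) Q Q"
        by (rule bij_betw_cong[THEN iffD1, OF _ b]) (simp add: ext_def)
      then have "ext f permutes Q"
        by (rule bij_imp_permutes) (simp add: ext_def)
      then show "p \<in> {p. p permutes Q}" using f by simp
    qed
    show "(\<lambda>p. restrict p Q) ` {p. p permutes Q} \<subseteq> Bij Q"
    proof
      fix f assume "f \<in> (\<lambda>p. restrict p Q) ` {p. p permutes Q}"
      then obtain p where p: "p permutes Q" "f = restrict p Q" by blast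
      have b: "bij_betw p Q Q" using p(1) by (rule permutes_imp_bij)
      have "bij_betw (restrict p Q) Q Q"
        by (rule bij_betw_cong[THEN iffD2, OF _ b]) simp
      then show "f \<in> Bij Q" using p(2) by (simp add: Bij_def)
    qed
  qed
  then have "card (Bij Q) = card {p. p permutes Q}" by (rule bij_betw_same_card)
  also have "\<dots> = fact (card Q)" using card_permutations[OF refl assms] .
  finally show ?thesis .
qed


lemma partition_unique_part:
  assumes "partition_on \<Omega> \<Delta>" "\<omega> \<in> \<Omega>"
  shows "\<exists>!\<gamma>. \<gamma> \<in> \<Delta> \<and> \<omega> \<in> \<gamma>"
proof -
  have "\<Omega> = \<Union>\<Delta>" using assms(1) by (rule partition_onD1)
  then obtain \<gamma> where g: "\<gamma> \<in> \<Delta>" "\<omega> \<in> \<gamma>" using assms(2) by blast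
  have d: "disjoint \<Delta>" using assms(1) by (rule partition_onD2)
  have "\<delta> = \<gamma>" if "\<delta> \<in> \<Delta>" "\<omega> \<in> \<delta>" for \<delta>
  proof (rule ccontr)
    assume "\<delta> \<noteq> \<gamma>"
    then have "\<delta> \<inter> \<gamma> = {}" using disjointD[OF d that(1) g(1)] by blast
    then show False using that(2) g(2) by blast
  qed
  then show ?thesis using g by blast
qed

lemma card_cartesian:
  assumes fin: "finite \<Omega>" and cd: "cartesian_decomposition \<Omega> E"
  shows "card \<Omega> = (\<Prod>\<Delta>\<in>E. card \<Delta>)"
proof -
  have part: "\<And>\<Delta>. \<Delta> \<in> E \<Longrightarrow> partition_on \<Omega> \<Delta>" using cd by (simp add: cartesian_decomposition_def)
  have one: "\<And>c. (\<forall>\<Delta>\<in>E. c \<Delta> \<in> \<Delta>) \<Longrightarrow> card (\<Omega> \<inter> (\<Inter>\<Delta>\<in>E. c \<Delta>)) = 1"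
    using cd by (simp add: cartesian_decomposition_def)
  have EPow: "E \<subseteq> Pow (Pow \<Omega>)"
  proof
    fix \<Delta> assume "\<Delta> \<in> E"
    then have "\<Omega> = \<Union>\<Delta>" using part partition_onD1 by blast
    then show "\<Delta> \<in> Pow (Pow \<Omega>)" by blast
  qed
  have finE: "finite E" using EPow fin by (meson finite_Pow_iff finite_subset)
  define pt where "pt \<Delta> \<omega> = (THE \<gamma>. \<gamma> \<in> \<Delta> \<and> \<omega> \<in> \<gamma>)" for \<Delta> and \<omega> :: 'a
  have pt: "pt \<Delta> \<omega> \<in> \<Delta> \<and> \<omega> \<in> pt \<Delta> \<omega>" if "\<Delta> \<in> E" "\<omega> \<in> \<Omega>" for \<Delta> \<omega>
    unfolding pt_def by (rule theI'[OF partition_unique_part[OF part[OF that(1)] that(2)]])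
  have pt_eq: "pt \<Delta> \<omega> = \<gamma>" if "\<Delta> \<in> E" "\<omega> \<in> \<Omega>" "\<gamma> \<in> \<Delta>" "\<omega> \<in> \<gamma>" for \<Delta> \<omega> \<gamma>
    unfolding pt_def by (rule the1_equality[OF partition_unique_part[OF part[OF that(1)] that(2)]]) (use that in blast)
  define f where "f \<omega> = (\<lambda>\<Delta>\<in>E. pt \<Delta> \<omega>)" for \<omega>
  have "bij_betw f \<Omega> (Pi\<^sub>E E (\<lambda>\<Delta>. \<Delta>))"
  proof (rule bij_betw_imageI)
    show "inj_on f \<Omega>"
    proof (rule inj_onI)
      fix x y assume x: "x \<in> \<Omega>" and y: "y \<in> \<Omega>" and fxy: "f x = f y"
      define c where "c \<Delta> = pt \<Delta> x" for \<Delta>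
      have c: "\<forall>\<Delta>\<in>E. c \<Delta> \<in> \<Delta>" using pt x unfolding c_def by blast
      have "x \<in> \<Omega> \<inter> (\<Inter>\<Delta>\<in>E. c \<Delta>)" using pt x unfolding c_def by blast
      moreover have "y \<in> \<Omega> \<inter> (\<Inter>\<Delta>\<in>E. c \<Delta>)"
      proof -
        have "pt \<Delta> y = c \<Delta>" if "\<Delta> \<in> E" for \<Delta>
          using fun_cong[OF fxy, of \<Delta>] that unfolding f_def c_def by simp
        then show ?thesis using pt y by blast
      qed
      moreover have "card (\<Omega> \<inter> (\<Inter>\<Delta>\<in>E. c \<Delta>)) = 1" using one c by blast
      ultimately show "x = y" by (metis card_1_singletonE singletonD)
    qed
    show "f ` \<Omega> = Pi\<^sub>E E (\<lambda>\<Delta>. \<Delta>)"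
    proof
      show "f ` \<Omega> \<subseteq> Pi\<^sub>E E (\<lambda>\<Delta>. \<Delta>)" using pt unfolding f_def by auto
      show "Pi\<^sub>E E (\<lambda>\<Delta>. \<Delta>) \<subseteq> f ` \<Omega>"
      proof
        fix c assume c: "c \<in> Pi\<^sub>E E (\<lambda>\<Delta>. \<Delta>)"
        then have "\<forall>\<Delta>\<in>E. c \<Delta> \<in> \<Delta>" by auto
        then have "card (\<Omega> \<inter> (\<Inter>\<Delta>\<in>E. c \<Delta>)) = 1" by (rule one)
        then obtain x where x: "x \<in> \<Omega> \<inter> (\<Inter>\<Delta>\<in>E. c \<Delta>)" by (metis card_1_singletonE singletonI)
        have "f x = c"
        proof
          fix \<Delta> show "f x \<Delta> = c \<Delta>"
          proof (cases "\<Delta> \<in> E")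
            case True
            then show ?thesis unfolding f_def using pt_eq[OF True _ _] x c by auto
          next
            case False
            then show ?thesis unfolding f_def using c by (auto simp: PiE_def extensional_def)
          qed
        qed
        then show "c \<in> f ` \<Omega>" using x by blast
      qed
    qed
  qed
  then have "card \<Omega> = card (Pi\<^sub>E E (\<lambda>\<Delta>. \<Delta>))" by (rule bij_betw_same_card)
  also have "\<dots> = (\<Prod>\<Delta>\<in>E. card \<Delta>)" by (rule card_PiE[OF finE])
  finally show ?thesis .
qed
theorem proposition3p1:
  fixes \<Omega> :: "'a set" and G M :: "('a \<Rightarrow> 'a) set" and E :: "'a set set set"
  assumes "finite \<Omega>"
    and "innately_transitive \<Omega> G"
    and "plinth \<Omega> G M"
    and "cartesian_decomposition \<Omega> E"
    and "invariant_decomposition G E"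
  shows "\<forall>\<Gamma>\<in>E. invariant_partition M \<Gamma>"
proof
  fix \<Gamma> assume \<Gamma>E: "\<Gamma> \<in> E"
  define B where "B = BijGroup \<Omega>"
  define H where "H = perm_grp \<Omega> G"
  have grpB: "group B" unfolding B_def by (rule group_BijGroup)
  have sgG: "subgroup G B" using assms(2) unfolding B_def innately_transitive_def perm_group_on_def by blast
  have Hdef: "H = B\<lparr>carrier := G\<rparr>" unfolding H_def B_def perm_grp_def ..
  have grpH: "group H" unfolding Hdef by (rule subgroup.subgroup_is_group[OF sgG grpB])
  have carrH: "carrier H = G" unfolding Hdef by simp
  have multH: "\<And>x y. x \<otimes>\<^bsub>H\<^esub> y = x \<otimes>\<^bsub>B\<^esub> y" unfolding Hdef by simp
  have oneH: "\<one>\<^bsub>H\<^esub> = \<one>\<^bsub>B\<^esub>" unfolding Hdef by simp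
  have GBij: "G \<subseteq> Bij \<Omega>" using subgroup.subset[OF sgG] unfolding B_def BijGroup_def by simp
  have Mnorm: "M \<lhd> H" and Mmin: "\<And>N. N \<lhd> H \<Longrightarrow> N \<subseteq> M \<Longrightarrow> N = {\<one>\<^bsub>H\<^esub>} \<or> N = M"
    and Mtr: "transitive_on \<Omega> M"
    using assms(3) unfolding plinth_def minimal_normal_def H_def by blast+
  have sgMH: "subgroup M H" using Mnorm by (rule normal_imp_subgroup)
  have MG: "M \<subseteq> G" using subgroup.subset[OF sgMH] carrH by simp
  have part: "\<And>\<Delta>. \<Delta> \<in> E \<Longrightarrow> partition_on \<Omega> \<Delta>" using assms(4) by (simp add: cartesian_decomposition_def)
  have EPow: "\<Delta> \<subseteq> Pow \<Omega>" if "\<Delta> \<in> E" for \<Delta>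
  proof -
    have "\<Omega> = \<Union>\<Delta>" using part[OF that] by (rule partition_onD1)
    then show ?thesis by blast
  qed
  have invE: "\<And>g \<Delta>. g \<in> G \<Longrightarrow> \<Delta> \<in> E \<Longrightarrow> part_image g \<Delta> \<in> E"
    using assms(5) by (simp add: invariant_decomposition_def)
  have finE: "finite E"
  proof -
    have "E \<subseteq> Pow (Pow \<Omega>)" using EPow by blast
    then show ?thesis using assms(1) by (meson finite_Pow_iff finite_subset)
  qed
  have finG: "finite \<Gamma>" by (rule finite_elements[OF assms(1) part[OF \<Gamma>E]])
  show "invariant_partition M \<Gamma>"
  proof (cases "card \<Gamma> \<ge> 2")
    case False
    show ?thesis unfolding invariant_partition_def
    proof (intro ballI)
      fix m \<gamma> assume m: "m \<in> M" and \<gamma>: "\<gamma> \<in> \<Gamma>"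
      have "card \<Gamma> > 0" using finG \<gamma> card_gt_0_iff by blast
      then have "card \<Gamma> = 1" using False by linarith
      then have "\<Gamma> = {\<gamma>}" using \<gamma> by (metis card_1_singletonE singletonD)
      then have \<gamma>\<Omega>: "\<gamma> = \<Omega>" using partition_onD1[OF part[OF \<Gamma>E]] by simp
      have "m \<in> Bij \<Omega>" using m MG GBij by blast
      then have "m ` \<Omega> = \<Omega>" by (simp add: Bij_def bij_betw_def)
      then show "m ` \<gamma> \<in> \<Gamma>" using \<gamma> \<gamma>\<Omega> by simp
    qed
  next
    case True
    define n where "n = card \<Gamma>"
    define Q where "Q = (\<lambda>g. part_image g \<Gamma>) ` G"
    have QE: "Q \<subseteq> E" using invE \<Gamma>E unfolding Q_def by blast
    have oneG: "\<one>\<^bsub>B\<^esub> \<in> G" by (rule subgroup.one_closed[OF sgG])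
    have \<Gamma>Q: "\<Gamma> \<in> Q"
    proof -
      have "part_image (\<one>\<^bsub>B\<^esub>) \<Gamma> = \<Gamma>" unfolding B_def by (rule part_image_one[OF EPow[OF \<Gamma>E]])
      then show ?thesis unfolding Q_def using oneG by (metis image_eqI)
    qed
    have QPow: "\<And>\<Delta>. \<Delta> \<in> Q \<Longrightarrow> \<Delta> \<subseteq> Pow \<Omega>" using QE EPow by blast
    have Qcard: "card \<Delta> = n" if dQ: "\<Delta> \<in> Q" for \<Delta>
    proof -
      obtain g where g: "g \<in> G" "\<Delta> = part_image g \<Gamma>" using dQ unfolding Q_def by blast
      show ?thesis unfolding g(2) n_def using part_image_card[OF _ EPow[OF \<Gamma>E]] g(1) GBij by blast
    qed
    have finQ: "finite Q" using finE QE by (rule finite_subset[rotated])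
    have Qclosed: "part_image g \<Delta> \<in> Q" if "g \<in> G" and dQ: "\<Delta> \<in> Q" for g \<Delta>
    proof -
      obtain h where h: "h \<in> G" "\<Delta> = part_image h \<Gamma>" using dQ unfolding Q_def by blast
      have "part_image g \<Delta> = part_image (g \<otimes>\<^bsub>B\<^esub> h) \<Gamma>"
        unfolding h(2) B_def using part_image_mult[OF _ _ EPow[OF \<Gamma>E], of g h] that(1) h(1) GBij by blast
      moreover have "g \<otimes>\<^bsub>B\<^esub> h \<in> G" by (rule subgroup.m_closed[OF sgG that(1) h(1)])
      ultimately show ?thesis unfolding Q_def by blast
    qed
    have invG: "inv\<^bsub>H\<^esub> g \<in> G" if "g \<in> G" for g
      using group.inv_closed[OF grpH, of g] that carrH by simp
    have pinv: "part_image (inv\<^bsub>H\<^esub> g) (part_image g \<Delta>) = \<Delta>" if "g \<in> G" "\<Delta> \<in> Q" for g \<Delta>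
    proof -
      have "part_image (inv\<^bsub>H\<^esub> g) (part_image g \<Delta>) = part_image (inv\<^bsub>H\<^esub> g \<otimes>\<^bsub>B\<^esub> g) \<Delta>"
        unfolding B_def using part_image_mult[OF _ _ QPow[OF that(2)], of "inv\<^bsub>H\<^esub> g" g] invG[OF that(1)] that(1) GBij by blast
      also have "inv\<^bsub>H\<^esub> g \<otimes>\<^bsub>B\<^esub> g = \<one>\<^bsub>B\<^esub>"
        using group.l_inv[OF grpH, of g] that(1) carrH multH oneH by simp
      also have "part_image (\<one>\<^bsub>B\<^esub>) \<Delta> = \<Delta>" unfolding B_def by (rule part_image_one[OF QPow[OF that(2)]])
      finally show ?thesis .
    qed
    define \<phi> where "\<phi> g = (\<lambda>\<Delta>\<in>Q. part_image g \<Delta>)" for g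
    have \<phi>Bij: "\<phi> g \<in> Bij Q" if g: "g \<in> G" for g
    proof -
      have "bij_betw (\<phi> g) Q Q"
      proof (rule bij_betw_byWitness[where f' = "\<phi> (inv\<^bsub>H\<^esub> g)"])
        show "\<forall>a\<in>Q. \<phi> (inv\<^bsub>H\<^esub> g) (\<phi> g a) = a"
          using pinv[OF g] Qclosed[OF g] unfolding \<phi>_def by simp
        have ii: "inv\<^bsub>H\<^esub> (inv\<^bsub>H\<^esub> g) = g" using group.inv_inv[OF grpH, of g] g carrH by simp
        show "\<forall>a\<in>Q. \<phi> g (\<phi> (inv\<^bsub>H\<^esub> g) a) = a"
          using pinv[OF invG[OF g]] Qclosed[OF invG[OF g]] ii unfolding \<phi>_def by simp
        show "\<phi> g ` Q \<subseteq> Q" using Qclosed[OF g] unfolding \<phi>_def by auto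
        show "\<phi> (inv\<^bsub>H\<^esub> g) ` Q \<subseteq> Q" using Qclosed[OF invG[OF g]] unfolding \<phi>_def by auto
      qed
      then show ?thesis unfolding Bij_def \<phi>_def by simp
    qed
    have \<phi>mult: "\<phi> (g \<otimes>\<^bsub>H\<^esub> h) = \<phi> g \<otimes>\<^bsub>BijGroup Q\<^esub> \<phi> h" if g: "g \<in> G" and h: "h \<in> G" for g h
    proof -
      have r: "\<phi> g \<otimes>\<^bsub>BijGroup Q\<^esub> \<phi> h = compose Q (\<phi> g) (\<phi> h)"
        using \<phi>Bij[OF g] \<phi>Bij[OF h] by (simp add: BijGroup_def)
      show ?thesis unfolding r
      proof
        fix x show "\<phi> (g \<otimes>\<^bsub>H\<^esub> h) x = compose Q (\<phi> g) (\<phi> h) x"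
        proof (cases "x \<in> Q")
          case True
          have "part_image (g \<otimes>\<^bsub>B\<^esub> h) x = part_image g (part_image h x)"
            unfolding B_def using part_image_mult[OF _ _ QPow[OF True], of g h] g h GBij by blast
          then show ?thesis using True Qclosed[OF h True] unfolding \<phi>_def multH by (simp add: compose_eq)
        next
          case False
          then show ?thesis unfolding \<phi>_def by (simp add: compose_def)
        qed
      qed
    qed
    have hom: "group_hom H (BijGroup Q) \<phi>"
    proof -
      have "\<phi> \<in> hom H (BijGroup Q)"
        unfolding hom_def using \<phi>Bij \<phi>mult carrH by (auto simp: BijGroup_def)
      then show ?thesis
        using grpH group_BijGroup by (simp add: group_hom_def group_hom_axioms_def)
    qed
    define K where "K = kernel H (BijGroup Q) \<phi>"
    have Knorm: "K \<lhd> H" unfolding K_def by (rule group_hom.normal_kernel[OF hom])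
    have MKnorm: "(M \<inter> K) \<lhd> H"
    proof -
      have s: "subgroup (M \<inter> K) H"
        by (rule group.subgroups_Inter_pair[OF grpH sgMH normal_imp_subgroup[OF Knorm]])
      have "\<forall>x\<in>carrier H. \<forall>h\<in>M. x \<otimes>\<^bsub>H\<^esub> h \<otimes>\<^bsub>H\<^esub> inv\<^bsub>H\<^esub> x \<in> M"
        using Mnorm group.normal_inv_iff[OF grpH] by blast
      moreover have "\<forall>x\<in>carrier H. \<forall>h\<in>K. x \<otimes>\<^bsub>H\<^esub> h \<otimes>\<^bsub>H\<^esub> inv\<^bsub>H\<^esub> x \<in> K"
        using Knorm group.normal_inv_iff[OF grpH] by blast
      ultimately show ?thesis using s group.normal_inv_iff[OF grpH] by blast
    qed
    have "M \<inter> K = {\<one>\<^bsub>H\<^esub>} \<or> M \<inter> K = M" using Mmin[OF MKnorm] by blast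
    then show ?thesis
    proof
      assume MK: "M \<inter> K = M"
      show ?thesis unfolding invariant_partition_def
      proof (intro ballI)
        fix m \<gamma> assume m: "m \<in> M" and \<gamma>: "\<gamma> \<in> \<Gamma>"
        have "m \<in> K" using MK m by blast
        then have "\<phi> m = \<one>\<^bsub>BijGroup Q\<^esub>" unfolding K_def kernel_def by simp
        then have "\<phi> m \<Gamma> = \<Gamma>" using \<Gamma>Q by (simp add: BijGroup_def)
        then have "part_image m \<Gamma> = \<Gamma>" using \<Gamma>Q unfolding \<phi>_def by simp
        then show "m ` \<gamma> \<in> \<Gamma>" using \<gamma> unfolding part_image_def by blast
      qed
    next
      assume MK: "M \<inter> K = {\<one>\<^bsub>H\<^esub>}"
      have "False"
      proof -
        have inj: "inj_on \<phi> M"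
        proof (rule inj_onI)
          fix x y assume x: "x \<in> M" and y: "y \<in> M" and e: "\<phi> x = \<phi> y"
          have xH: "x \<in> carrier H" and yH: "y \<in> carrier H" using x y MG carrH by auto
          have iyH: "inv\<^bsub>H\<^esub> y \<in> carrier H" using group.inv_closed[OF grpH yH] .
          have "\<phi> (x \<otimes>\<^bsub>H\<^esub> inv\<^bsub>H\<^esub> y) = \<phi> x \<otimes>\<^bsub>BijGroup Q\<^esub> \<phi> (inv\<^bsub>H\<^esub> y)"
            by (rule group_hom.hom_mult[OF hom xH iyH])
          also have "\<phi> (inv\<^bsub>H\<^esub> y) = inv\<^bsub>BijGroup Q\<^esub> (\<phi> y)"
            by (rule group_hom.hom_inv[OF hom yH])
          also have "\<phi> x \<otimes>\<^bsub>BijGroup Q\<^esub> inv\<^bsub>BijGroup Q\<^esub> (\<phi> y) = \<one>\<^bsub>BijGroup Q\<^esub>"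
          proof -
            have "\<phi> y \<in> carrier (BijGroup Q)" using \<phi>Bij y MG by (simp add: BijGroup_def subset_iff)
            then show ?thesis unfolding e by (rule group.r_inv[OF group_BijGroup])
          qed
          finally have "x \<otimes>\<^bsub>H\<^esub> inv\<^bsub>H\<^esub> y \<in> K" unfolding K_def kernel_def
            using monoid.m_closed[OF group.is_monoid[OF grpH] xH iyH] by simp
          moreover have "x \<otimes>\<^bsub>H\<^esub> inv\<^bsub>H\<^esub> y \<in> M"
            using subgroup.m_closed[OF sgMH x subgroup.m_inv_closed[OF sgMH y]] .
          ultimately have "x \<otimes>\<^bsub>H\<^esub> inv\<^bsub>H\<^esub> y = \<one>\<^bsub>H\<^esub>" using MK by blast
          then have "x \<otimes>\<^bsub>H\<^esub> inv\<^bsub>H\<^esub> y \<otimes>\<^bsub>H\<^esub> y = y"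
            using monoid.l_one[OF group.is_monoid[OF grpH] yH] by simp
          moreover have "x \<otimes>\<^bsub>H\<^esub> inv\<^bsub>H\<^esub> y \<otimes>\<^bsub>H\<^esub> y = x"
            using monoid.m_assoc[OF group.is_monoid[OF grpH] xH iyH yH] group.l_inv[OF grpH yH] monoid.r_one[OF group.is_monoid[OF grpH] xH] by simp
          ultimately show "x = y" by simp
        qed
        have cardM1: "card M dvd fact (card Q)"
        proof -
          have sub: "subgroup (\<phi> ` M) (BijGroup Q)"
            by (rule group_hom.subgroup_img_is_subgroup[OF hom sgMH])
          have "card (rcosets\<^bsub>BijGroup Q\<^esub> (\<phi> ` M)) * card (\<phi> ` M) = order (BijGroup Q)"
            by (rule group.lagrange[OF group_BijGroup sub])
          then have "card (\<phi> ` M) dvd order (BijGroup Q)" by (metis dvd_triv_right)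
          moreover have "card (\<phi> ` M) = card M" by (rule card_image[OF inj])
          moreover have "order (BijGroup Q) = fact (card Q)"
            unfolding order_def using card_Bij[OF finQ] by (simp add: BijGroup_def)
          ultimately show ?thesis by simp
        qed
        have cardM2: "card \<Omega> dvd card M"
        proof -
          have sgMB: "subgroup M B"
            by (rule group.incl_subgroup[OF grpB sgG]) (use sgMH Hdef in simp)
          define BM where "BM = B\<lparr>carrier := M\<rparr>"
          have grpBM: "group BM" unfolding BM_def by (rule subgroup.subgroup_is_group[OF sgMB grpB])
          have MBij: "M \<subseteq> Bij \<Omega>" using MG GBij by blast
          have "group_hom BM (BijGroup \<Omega>) (\<lambda>g. g)"
          proof -
            have "(\<lambda>g. g) \<in> hom BM (BijGroup \<Omega>)"
              unfolding hom_def BM_def B_def using MBij by (auto simp: BijGroup_def)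
            then show ?thesis using grpBM group_BijGroup by (simp add: group_hom_def group_hom_axioms_def)
          qed
          then have act: "group_action BM \<Omega> (\<lambda>g. g)" by (simp add: group_action_def)
          obtain \<gamma> where \<gamma>: "\<gamma> \<in> \<Gamma>" using True by fastforce
          have "\<gamma> \<noteq> {}" using partition_onD3[OF part[OF \<Gamma>E]] \<gamma> by blast
          then obtain \<omega> where \<omega>: "\<omega> \<in> \<gamma>" by blast
          have \<omega>\<Omega>: "\<omega> \<in> \<Omega>" using EPow[OF \<Gamma>E] \<gamma> \<omega> by blast
          have orb: "orbit BM (\<lambda>g. g) \<omega> = \<Omega>"
          proof
            show "orbit BM (\<lambda>g. g) \<omega> \<subseteq> \<Omega>"
              unfolding orbit_def BM_def using MBij \<omega>\<Omega> Bij_imp_funcset by fastforce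
            show "\<Omega> \<subseteq> orbit BM (\<lambda>g. g) \<omega>"
              unfolding orbit_def BM_def using Mtr \<omega>\<Omega> unfolding transitive_on_def by fastforce
          qed
          have "card (orbit BM (\<lambda>g. g) \<omega>) * card (stabilizer BM (\<lambda>g. g) \<omega>) = order BM"
            by (rule group_action.orbit_stabilizer_theorem[OF act \<omega>\<Omega>])
          moreover have "order BM = card M" by (simp add: order_def BM_def)
          ultimately have "card \<Omega> * card (stabilizer BM (\<lambda>g. g) \<omega>) = card M"
            using orb by simp
          then show ?thesis by (metis dvd_triv_left)
        qed
        have cardQ: "card Q > 0" using finQ \<Gamma>Q card_gt_0_iff by blast
        have "n ^ card Q dvd card \<Omega>"
        proof -
          have "card \<Omega> = (\<Prod>\<Delta>\<in>E. card \<Delta>)" by (rule card_cartesian[OF assms(1) assms(4)])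
          also have "\<dots> = (\<Prod>\<Delta>\<in>E - Q. card \<Delta>) * (\<Prod>\<Delta>\<in>Q. card \<Delta>)"
            by (rule prod.subset_diff[OF QE finE])
          also have "(\<Prod>\<Delta>\<in>Q. card \<Delta>) = (\<Prod>\<Delta>\<in>Q. n)" by (rule prod.cong[OF refl Qcard])
          also have "\<dots> = n ^ card Q" by simp
          finally show ?thesis by simp
        qed
        moreover obtain p :: nat where p: "prime p" "p dvd n"
          using prime_factor_nat[of n] True unfolding n_def by auto
        ultimately have "p ^ card Q dvd fact (card Q)"
          using cardM1 cardM2 dvd_power_same[OF p(2)] by (meson dvd_trans)
        then show False using not_pow_dvd_fact[OF p(1) cardQ] by blast
      qed
      then show ?thesis ..
    qed
  qed
qed

end
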